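(* Under the standing assumptions of the context, \[ \sum_{\ell\in\mathbb N:\ \mathcal K_\ell\ne\emptyset}\frac1\ell<\infty . \]
   Context: Standing assumptions: $A=\{0,1\}$, $\Sigma=A^{\mathbb N_0}$ with metric $\rho(y,z)=2^{-\min\{i\ge0:\,y_i\ne z_i\}}$ ($y\ne z$) and shift $\sigma$. $\zeta:A\to A^*$ is a binary substitution of constant length $q\ge2$, primitive (for some $k$, every letter occurs in $\zeta^k(a)$ for all $a$), aperiodic (its subshift $X_\zeta$ contains a non-$\sigma$-periodic sequence), with $\zeta(0)$ starting with $0$; $x=\lim_k\zeta^k(0)$ is its fixed point starting with $0$. In the infinite recurrence plot $R(x,\infty,1/2)$ (indices $i,j\in\mathbb N_0$, entry $1$ iff $x_i=x_j$), a line of length $\ell$ is $(i,j,\ell)$ with $i\ne j$, entries $(i+k,j+k)=1$ for $0\le k<\ell$, entry $(i-1,j-1)=0$ if $\min\{i,j\}>0$, entry $(i+\ell,j+\ell)=0$; it is inner if $\min\{i,j\}>0$. $\mathcal K_\ell=\{(i,j)\in\mathbb N^2:(i,j,\ell)\text{ is an inner line in }R(x,\infty,1/2)\}$. *)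

theory Defs
  imports "HOL-Analysis.Analysis"
begin

text \<open>Binary alphabet A = {0,1} (as naturals); a substitution is a map nat => nat list,
  only its values on {0,1} matter.\<close>

definition alph :: "nat set" where "alph = {0, 1}"

fun subst_word_pow :: "(nat \<Rightarrow> nat list) \<Rightarrow> nat \<Rightarrow> nat list \<Rightarrow> nat list" where
  "subst_word_pow \<zeta> 0 w = w"
| "subst_word_pow \<zeta> (Suc k) w = concat (map \<zeta> (subst_word_pow \<zeta> k w))"

definition subst_pow :: "(nat \<Rightarrow> nat list) \<Rightarrow> nat \<Rightarrow> nat \<Rightarrow> nat list" where
  "subst_pow \<zeta> k a = subst_word_pow \<zeta> k [a]"

definition binary_subst :: "(nat \<Rightarrow> nat list) \<Rightarrow> bool" where
  "binary_subst \<zeta> \<longleftrightarrow> (\<forall>a\<in>alph. set (\<zeta> a) \<subseteq> alph)"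

definition constant_length :: "(nat \<Rightarrow> nat list) \<Rightarrow> nat \<Rightarrow> bool" where
  "constant_length \<zeta> q \<longleftrightarrow> (\<forall>a\<in>alph. length (\<zeta> a) = q)"

definition primitive_subst :: "(nat \<Rightarrow> nat list) \<Rightarrow> bool" where
  "primitive_subst \<zeta> \<longleftrightarrow> (\<exists>k. \<forall>a\<in>alph. \<forall>b\<in>alph. b \<in> set (subst_pow \<zeta> k a))"

definition subst_language :: "(nat \<Rightarrow> nat list) \<Rightarrow> nat list set" where
  "subst_language \<zeta> = {w. \<exists>k. \<exists>a\<in>alph. \<exists>u v. subst_pow \<zeta> k a = u @ w @ v}"

definition subshift :: "(nat \<Rightarrow> nat list) \<Rightarrow> (nat \<Rightarrow> nat) set" where
  "subshift \<zeta> = {y. (\<forall>n. y n \<in> alph) \<and>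
      (\<forall>i n. map (\<lambda>m. y (i + m)) [0..<n] \<in> subst_language \<zeta>)}"

definition shift_periodic :: "(nat \<Rightarrow> nat) \<Rightarrow> bool" where
  "shift_periodic y \<longleftrightarrow> (\<exists>p>0. \<forall>n. y (n + p) = y n)"

definition aperiodic_subst :: "(nat \<Rightarrow> nat list) \<Rightarrow> bool" where
  "aperiodic_subst \<zeta> \<longleftrightarrow> (\<exists>y\<in>subshift \<zeta>. \<not> shift_periodic y)"

text \<open>x is the limit of zeta^k(0): it agrees with every zeta^k(0) on its length.\<close>
definition is_fixed_point_limit :: "(nat \<Rightarrow> nat list) \<Rightarrow> (nat \<Rightarrow> nat) \<Rightarrow> bool" where
  "is_fixed_point_limit \<zeta> x \<longleftrightarrow>
     (\<forall>k i. i < length (subst_pow \<zeta> k 0) \<longrightarrow> x i = subst_pow \<zeta> k 0 ! i)"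

text \<open>Entry of the infinite recurrence plot R(x,infinity,1/2).\<close>
definition rp_entry :: "(nat \<Rightarrow> nat) \<Rightarrow> nat \<Rightarrow> nat \<Rightarrow> bool" where
  "rp_entry x i j \<longleftrightarrow> x i = x j"

definition rp_line :: "(nat \<Rightarrow> nat) \<Rightarrow> nat \<Rightarrow> nat \<Rightarrow> nat \<Rightarrow> bool" where
  "rp_line x i j l \<longleftrightarrow> i \<noteq> j
     \<and> (\<forall>k<l. rp_entry x (i + k) (j + k))
     \<and> (min i j > 0 \<longrightarrow> \<not> rp_entry x (i - 1) (j - 1))
     \<and> \<not> rp_entry x (i + l) (j + l)"

definition inner_lines :: "(nat \<Rightarrow> nat) \<Rightarrow> nat \<Rightarrow> (nat \<times> nat) set" where
  "inner_lines x l = {(i, j). i > 0 \<and> j > 0 \<and> rp_line x i j l}"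

end

theory Submission
  imports Defs
begin


lemma len_concat_const:
  "(\<forall>a\<in>set W. length (\<zeta> a) = q) \<Longrightarrow> length (concat (map \<zeta> W)) = q * length W"
  by (induction W) auto

lemma nth_concat_const:
  assumes "\<forall>a\<in>set W. length (\<zeta> a) = q" "n < length W" "r < q"
  shows "concat (map \<zeta> W) ! (q*n + r) = \<zeta> (W!n) ! r"
  using assms
proof (induction W arbitrary: n)
  case Nil then show ?case by simp
next
  case (Cons a W)
  show ?case
  proof (cases n)
    case 0 then show ?thesis using Cons.prems by (simp add: nth_append)
  next
    case (Suc n')
    have e: "q*n + r = q + (q*n' + r)" using Suc by simp
    have la: "length (\<zeta> a) = q" using Cons.prems by simp
    have "concat (map \<zeta> (a#W)) ! (q*n+r) = concat (map \<zeta> W) ! (q*n'+r)"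
      unfolding e using la by (simp add: nth_append)
    also have "\<dots> = \<zeta> (W!n') ! r" using Cons.IH[of n'] Cons.prems Suc by simp
    finally show ?thesis using Suc by simp
  qed
qed

locale sub =
  fixes \<zeta> :: "nat \<Rightarrow> nat list" and q :: nat and x :: "nat \<Rightarrow> nat"
  assumes bin: "binary_subst \<zeta>"
    and q2: "q \<ge> 2" and cl: "constant_length \<zeta> q"
    and prim: "primitive_subst \<zeta>"
    and aper: "aperiodic_subst \<zeta>"
    and hd0: "hd (\<zeta> 0) = 0"
    and fp: "is_fixed_point_limit \<zeta> x"
begin

lemma zlen: "a \<in> alph \<Longrightarrow> length (\<zeta> a) = q" using cl by (simp add: constant_length_def)
lemma zset: "a \<in> alph \<Longrightarrow> set (\<zeta> a) \<subseteq> alph" using bin by (simp add: binary_subst_def)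

lemma swp:
  "set w \<subseteq> alph \<Longrightarrow> set (subst_word_pow \<zeta> K w) \<subseteq> alph \<and> length (subst_word_pow \<zeta> K w) = q^K * length w"
proof (induction K)
  case 0 then show ?case by simp
next
  case (Suc K)
  then have IH: "set (subst_word_pow \<zeta> K w) \<subseteq> alph" "length (subst_word_pow \<zeta> K w) = q^K * length w" by auto
  have "\<forall>a\<in>set (subst_word_pow \<zeta> K w). length (\<zeta> a) = q" using IH zlen by auto
  then have "length (concat (map \<zeta> (subst_word_pow \<zeta> K w))) = q * (q^K * length w)"
    using len_concat_const IH by metis
  moreover have "set (concat (map \<zeta> (subst_word_pow \<zeta> K w))) \<subseteq> alph" using IH zset by auto
  ultimately show ?case by simp
qed

lemma sp_set: "a \<in> alph \<Longrightarrow> set (subst_pow \<zeta> K a) \<subseteq> alph"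
  using swp[of "[a]" K] by (simp add: subst_pow_def)
lemma sp_len: "a \<in> alph \<Longrightarrow> length (subst_pow \<zeta> K a) = q^K"
  using swp[of "[a]" K] by (simp add: subst_pow_def)

lemma sp_Suc: "subst_pow \<zeta> (Suc K) a = concat (map \<zeta> (subst_pow \<zeta> K a))"
  by (simp add: subst_pow_def)

lemma alph0: "0 \<in> alph" and alph1: "1 \<in> alph" by (auto simp: alph_def)

lemma n_lt_pow: "n < q^n"
  using q2 by (metis less_exp less_le_trans one_less_numeral_iff power_mono semiring_norm(76) zero_le)

lemma x_sp: "n < q^K \<Longrightarrow> x n = subst_pow \<zeta> K 0 ! n"
  using fp sp_len[OF alph0, of K] by (simp add: is_fixed_point_limit_def)

lemma x_alph: "x n \<in> alph"
  using x_sp[OF n_lt_pow] sp_set[OF alph0, of n] sp_len[OF alph0, of n] n_lt_pow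
  by (metis nth_mem subsetD)

lemma x_step: "r < q \<Longrightarrow> x (q*n + r) = \<zeta> (x n) ! r"
proof -
  assume r: "r < q"
  have n: "n < q^n" by (rule n_lt_pow)
  have "q*n + r < q^Suc n"
  proof -
    have "Suc n \<le> q^n" using n by simp
    then have "q * Suc n \<le> q * q^n" by (rule mult_le_mono2)
    moreover have "q*n + r < q * Suc n" using r by simp
    ultimately show ?thesis by simp
  qed
  then have "x (q*n + r) = subst_pow \<zeta> (Suc n) 0 ! (q*n+r)" by (rule x_sp)
  also have "\<dots> = \<zeta> (subst_pow \<zeta> n 0 ! n) ! r"
    unfolding sp_Suc using nth_concat_const[of "subst_pow \<zeta> n 0" \<zeta> q n r] sp_set[OF alph0] sp_len[OF alph0] zlen n r
    by (metis subsetD)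
  also have "\<dots> = \<zeta> (x n) ! r" using x_sp[OF n] by simp
  finally show ?thesis .
qed

lemma x_block: "r < q^K \<Longrightarrow> x (q^K*n + r) = subst_pow \<zeta> K (x n) ! r"
proof (induction K arbitrary: r)
  case 0 then show ?case by (simp add: subst_pow_def)
next
  case (Suc K)
  have q0: "q > 0" using q2 by simp
  define r1 where "r1 = r div q"
  define r2 where "r2 = r mod q"
  have r: "r = q*r1 + r2" unfolding r1_def r2_def by simp
  have r2: "r2 < q" unfolding r2_def using q0 by simp
  have r1: "r1 < q^K" using Suc.prems unfolding r1_def by (simp add: less_mult_imp_div_less mult.commute)
  have "q^Suc K * n + r = q * (q^K*n + r1) + r2" using r by (simp add: algebra_simps)
  then have "x (q^Suc K * n + r) = \<zeta> (x (q^K*n + r1)) ! r2" using x_step[OF r2] by simp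
  also have "\<dots> = \<zeta> (subst_pow \<zeta> K (x n) ! r1) ! r2" using Suc.IH[OF r1] by simp
  also have "\<dots> = subst_pow \<zeta> (Suc K) (x n) ! r"
    unfolding sp_Suc r using nth_concat_const[of "subst_pow \<zeta> K (x n)" \<zeta> q r1 r2] sp_set[OF x_alph] sp_len[OF x_alph] zlen r1 r2
    by (metis subsetD)
  finally show ?case .
qed

lemma x0: "x 0 = 0"
proof -
  have ne: "\<zeta> 0 \<noteq> []" using zlen[OF alph0] q2 by auto
  have "x 0 = subst_pow \<zeta> 1 0 ! 0" using q2 by (intro x_sp) simp
  also have "\<dots> = \<zeta> 0 ! 0" by (simp add: subst_pow_def)
  also have "\<dots> = 0" using hd0 ne by (simp add: hd_conv_nth)
  finally show ?thesis .
qed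

lemma occurs: "a \<in> alph \<Longrightarrow> \<exists>m. x m = a"
proof -
  assume a: "a \<in> alph"
  obtain k where k: "\<forall>a\<in>alph. \<forall>b\<in>alph. b \<in> set (subst_pow \<zeta> k a)" using prim by (auto simp: primitive_subst_def)
  then have "a \<in> set (subst_pow \<zeta> k 0)" using a alph0 by auto
  then obtain r where r: "r < length (subst_pow \<zeta> k 0)" "subst_pow \<zeta> k 0 ! r = a" by (metis in_set_conv_nth)
  then have "x (q^k*0 + r) = a" using x_block[of r k 0] sp_len[OF alph0] x0 by simp
  then show ?thesis by blast
qed

lemma periodic_false:
  assumes p: "p > 0" and per: "\<And>n. x (n + p) = x n"
  shows False
proof -
  obtain y where y: "y \<in> subshift \<zeta>" "\<not> shift_periodic y" using aper by (auto simp: aperiodic_subst_def)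
  have "y (n + p) = y n" for n
  proof -
    let ?w = "map (\<lambda>m. y (n + m)) [0..<p+1]"
    have "?w \<in> subst_language \<zeta>" using y(1) unfolding subshift_def by blast
    then obtain K a u v where Ka: "a \<in> alph" "subst_pow \<zeta> K a = u @ ?w @ v" by (auto simp: subst_language_def)
    obtain m where m: "x m = a" using occurs[OF Ka(1)] by blast
    have "length (subst_pow \<zeta> K a) = length u + (p+1) + length v" using Ka(2) by simp
    then have len: "length u + p < q^K" using sp_len[OF Ka(1), of K] by linarith
    have e: "subst_pow \<zeta> K a ! (length u + t) = y (n + t)" if "t \<le> p" for t
      using Ka(2) that by (simp add: nth_append)
    have "y (n + p) = x (q^K*m + (length u + p))" using e[of p] x_block[OF len, of m] m by simp
    also have "\<dots> = x (q^K*m + length u + p)" by (simp add: add.assoc)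
    also have "\<dots> = x (q^K*m + length u)" using per by simp
    also have "\<dots> = y n" using e[of 0] x_block[of "length u" K m] len m by simp
    finally show ?thesis .
  qed
  then show False using y(2) p unfolding shift_periodic_def by blast
qed

end




lemma binj: "h True \<noteq> h False \<Longrightarrow> h a = h b \<Longrightarrow> a = b"
  by (cases a; cases b) auto
lemma bcst: "h True = h False \<Longrightarrow> h a = h b"
  by (cases a; cases b) auto
lemma bcst2: "(a::bool) \<noteq> b \<Longrightarrow> h a = h b \<Longrightarrow> h True = h False"
  by (cases a; cases b) auto

lemma recog_core:
  fixes X :: "nat \<Rightarrow> bool" and f :: "nat \<Rightarrow> bool \<Rightarrow> bool"
  assumes q: "q > 0"
  and rel: "\<And>n r. r < q \<Longrightarrow> X (q*n+r) = f r (X n)"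
  and r0: "r0 < q" "f r0 True \<noteq> f r0 False"
  and nop: "\<And>n. \<not> (\<forall>k<P. X (n+k+2) = X (n+k))"
  and eq: "\<And>k. k < q*(P+4) \<Longrightarrow> X (i+k) = X (j+k)"
  and ji: "j < i"
  shows "i mod q = j mod q"
proof (rule ccontr)
  assume ne: "i mod q \<noteq> j mod q"
  define \<delta> where "\<delta> = i - j"
  define d where "d = \<delta> mod q"
  define D where "D = \<delta> div q"
  have dq: "d < q" using q by (simp add: d_def)
  have \<delta>: "\<delta> = q*D + d" unfolding d_def D_def by simp
  have i: "i = j + \<delta>" using ji unfolding \<delta>_def by simp
  have d0: "d > 0"
  proof (rule ccontr)
    assume "\<not> d > 0"
    then have "i = j + q*D" using i \<delta> by simp
    then show False using ne by simp
  qed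
  define T where "T = P + 2"
  define n1 where "n1 = i div q + 1"
  have n1a: "i \<le> q*n1" "q*n1 \<le> i + q"
  proof -
    have "q * (i div q) \<le> i" by simp
    moreover have "i < q * (i div q) + q" using q by (metis mod_less_divisor div_mult_mod_eq add.commute add_less_cancel_left mult.commute)
    ultimately show "i \<le> q*n1" "q*n1 \<le> i + q" unfolding n1_def by auto
  qed
  have n1D: "D + 1 \<le> n1"
  proof -
    have "q*D < q*n1" using \<delta> i n1a d0 by linarith
    then show ?thesis by simp
  qed
  define c0 where "c0 = n1 - D - 1"
  define W where "W t = X (n1 + t)" for t
  define Y where "Y t = X (c0 + t)" for t
  have E: "X m = X (m - \<delta>)" if "i \<le> m" "m < q*(n1+t) + q" "t \<le> T" for m t
  proof -
    have "q*(n1+t) + q \<le> i + q*(P+4)"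
    proof -
      have "q*t \<le> q*T" using that(3) by simp
      then show ?thesis using n1a unfolding T_def by (simp add: algebra_simps)
    qed
    then have "m - i < q*(P+4)" using that by linarith
    then have "X (i + (m-i)) = X (j + (m-i))" by (rule eq)
    moreover have "i + (m-i) = m" "j + (m-i) = m - \<delta>" using that i by auto
    ultimately show ?thesis by simp
  qed
  have E1: "f r (W t) = f (r-d) (Y (t+1))" if "t \<le> T" "d \<le> r" "r < q" for t r
  proof -
    let ?m = "q*(n1+t) + r"
    have m: "?m - \<delta> = q*(c0 + (t+1)) + (r-d)"
    proof -
      have "q*(c0 + (t+1)) + (r-d) + \<delta> = ?m"
      proof -
        have "c0 + (t+1) + D = n1 + t" unfolding c0_def using n1D by simp
        then have "q*(c0 + (t+1)) + q*D = q*(n1+t)" by (metis distrib_left)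
        then show ?thesis using \<delta> that(2) by simp
      qed
      then show ?thesis by simp
    qed
    have "f r (W t) = X ?m" using rel that(3) unfolding W_def by simp
    also have "\<dots> = X (?m - \<delta>)" by (rule E[OF _ _ that(1)]) (use n1a that in \<open>auto simp: distrib_left\<close>)
    also have "\<dots> = f (r-d) (Y (t+1))" unfolding m Y_def by (rule rel) (use that in simp)
    finally show ?thesis .
  qed
  have E2: "f r (W t) = f (r+q-d) (Y t)" if "t \<le> T" "r < d" for t r
  proof -
    let ?m = "q*(n1+t) + r"
    have m: "?m - \<delta> = q*(c0 + t) + (r+q-d)"
    proof -
      have "q*(c0 + t) + (r+q-d) + \<delta> = ?m"
      proof -
        have "c0 + t + 1 + D = n1 + t" unfolding c0_def using n1D by simp
        then have "q*(c0 + t) + q + q*D = q*(n1+t)" by (metis distrib_left mult.right_neutral)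
        then show ?thesis using \<delta> that(2) dq by simp
      qed
      then show ?thesis by simp
    qed
    have "f r (W t) = X ?m" using rel that dq unfolding W_def by simp
    also have "\<dots> = X (?m - \<delta>)" by (rule E[OF _ _ that(1)]) (use n1a that dq in \<open>auto simp: distrib_left\<close>)
    also have "\<dots> = f (r+q-d) (Y t)" unfolding m Y_def by (rule rel) (use that dq in simp)
    finally show ?thesis .
  qed
  have VW: False if "\<forall>t\<le>T. W t = W 0"
  proof -
    have "\<forall>k<P. X (n1+k+2) = X (n1+k)"
    proof (intro allI impI)
      fix k assume "k < P"
      then have "W (k+2) = W 0" "W k = W 0" using that[rule_format, of "k+2"] that[rule_format, of k] by (simp_all add: T_def)
      then show "X (n1+k+2) = X (n1+k)" unfolding W_def by (simp add: add.assoc)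
    qed
    then show False using nop by blast
  qed
  have VY: False if "\<forall>t. a \<le> t \<longrightarrow> t \<le> a + T \<longrightarrow> Y t = Y a" for a
  proof -
    have "\<forall>k<P. X (c0+a+k+2) = X (c0+a+k)"
    proof (intro allI impI)
      fix k assume "k < P"
      then have "Y (a+k+2) = Y a" "Y (a+k) = Y a" using that[rule_format, of "a+k+2"] that[rule_format, of "a+k"] by (simp_all add: T_def)
      then show "X (c0+a+k+2) = X (c0+a+k)" unfolding Y_def by (simp add: add.assoc)
    qed
    then show False using nop by blast
  qed
  have Vper: False if "\<forall>t t'. t \<le> T \<longrightarrow> t' \<le> T \<longrightarrow> Y t = Y t' \<longrightarrow> Y (t+1) = Y (t'+1)"
  proof -
    have "\<forall>k<P. X (c0+1+k+2) = X (c0+1+k)"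
    proof (intro allI impI)
      fix k assume k: "k < P"
      have kT: "k \<le> T" "k+1 \<le> T" "k+2 \<le> T" using k unfolding T_def by auto
      have h1: "Y k = Y (k+1) \<Longrightarrow> Y (k+1) = Y (k+2)" using that[rule_format, OF kT(1) kT(2)] by simp
      have h2: "Y k = Y (k+2) \<Longrightarrow> Y (k+1) = Y (k+3)" using that[rule_format, OF kT(1) kT(3)] by (simp add: eval_nat_numeral)
      have h3: "Y (k+1) = Y (k+2) \<Longrightarrow> Y (k+2) = Y (k+3)" using that[rule_format, OF kT(2) kT(3)] by (simp add: eval_nat_numeral)
      have "Y (k+3) = Y (k+1)" using h1 h2 h3 by (cases "Y k"; cases "Y (k+1)"; cases "Y (k+2)"; cases "Y (k+3)") auto
      then show "X (c0+1+k+2) = X (c0+1+k)" unfolding Y_def by (simp add: add.assoc eval_nat_numeral)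
    qed
    then show False using nop by blast
  qed
  show False
  proof (cases "d \<le> r0")
    case True
    define g where "g = f (r0 - d)"
    have e0: "f r0 (W t) = g (Y (t+1))" if "t \<le> T" for t using E1[OF that True r0(1)] g_def by simp
    show False
    proof (cases "g True = g False")
      case True
      then have "\<forall>t\<le>T. W t = W 0" using e0 binj[OF r0(2)] bcst by (metis le0)
      then show False by (rule VW)
    next
      case gi: False
      show False
      proof (cases "\<forall>t\<le>T. Y (t+1) = Y 1")
        case True
        then have "\<forall>t. 1 \<le> t \<longrightarrow> t \<le> 1 + T \<longrightarrow> Y t = Y 1"
          by (metis add.commute le_add_diff_inverse add_le_cancel_left)
        then show False by (rule VY)
      next
        case False
        then obtain t1 where t1: "t1 \<le> T" "Y (t1+1) \<noteq> Y 1" by auto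
        have WY: "W t = W t' \<longleftrightarrow> Y (t+1) = Y (t'+1)" if "t \<le> T" "t' \<le> T" for t t'
          using e0[OF that(1)] e0[OF that(2)] binj[OF r0(2)] binj[OF gi] by metis
        have Wt1: "W t1 \<noteq> W 0" using WY[OF t1(1), of 0] t1 by simp
        have cst: "f r True = f r False" if "r < q" for r
          using that
        proof (induction r rule: less_induct)
          case (less r)
          show ?case
          proof (cases "r < d")
            case True
            show ?thesis
            proof (rule ccontr)
              assume nc: "f r True \<noteq> f r False"
              have "\<forall>t t'. t \<le> T \<longrightarrow> t' \<le> T \<longrightarrow> Y t = Y t' \<longrightarrow> Y (t+1) = Y (t'+1)"
              proof (intro allI impI)
                fix t t' assume a: "t \<le> T" "t' \<le> T" "Y t = Y t'"
                have "f r (W t) = f r (W t')" using E2[OF a(1) True] E2[OF a(2) True] a(3) by simp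
                then have "W t = W t'" by (rule binj[OF nc])
                then show "Y (t+1) = Y (t'+1)" using WY a by simp
              qed
              then show False by (rule Vper)
            qed
          next
            case False
            then have IH: "f (r-d) True = f (r-d) False" using less.IH[of "r-d"] less.prems d0 by simp
            have "f r (W t1) = f r (W 0)"
              using E1[OF t1(1), of r] E1[of 0 r] False less.prems bcst[OF IH] by simp
            then show ?thesis by (rule bcst2[OF Wt1])
          qed
        qed
        then show False using cst[OF r0(1)] r0(2) by simp
      qed
    qed
  next
    case False
    then have r0d: "r0 < d" by simp
    define g where "g = f (r0 + q - d)"
    have e0: "f r0 (W t) = g (Y t)" if "t \<le> T" for t using E2[OF that r0d] g_def by simp
    show False
    proof (cases "g True = g False")
      case True
      then have "\<forall>t\<le>T. W t = W 0" using e0 binj[OF r0(2)] bcst by (metis le0)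
      then show False by (rule VW)
    next
      case gi: False
      show False
      proof (cases "\<forall>t\<le>T. Y t = Y 0")
        case True
        then have "\<forall>t. 0 \<le> t \<longrightarrow> t \<le> 0 + T \<longrightarrow> Y t = Y 0" by (metis add_0)
        then show False by (rule VY)
      next
        case False
        then obtain t1 where t1: "t1 \<le> T" "Y t1 \<noteq> Y 0" by auto
        have WY: "W t = W t' \<longleftrightarrow> Y t = Y t'" if "t \<le> T" "t' \<le> T" for t t'
          using e0[OF that(1)] e0[OF that(2)] binj[OF r0(2)] binj[OF gi] by metis
        have A: "f r' True = f r' False" if "r' < q - d" for r'
        proof (rule ccontr)
          assume nc: "f r' True \<noteq> f r' False"
          have "\<forall>t t'. t \<le> T \<longrightarrow> t' \<le> T \<longrightarrow> Y t = Y t' \<longrightarrow> Y (t+1) = Y (t'+1)"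
          proof (intro allI impI)
            fix t t' assume a: "t \<le> T" "t' \<le> T" "Y t = Y t'"
            have "W t = W t'" using WY a by simp
            then have "f r' (Y (t+1)) = f r' (Y (t'+1))"
              using E1[OF a(1), of "r'+d"] E1[OF a(2), of "r'+d"] that by simp
            then show "Y (t+1) = Y (t'+1)" by (rule binj[OF nc])
          qed
          then show False by (rule Vper)
        qed
        have B: "f r True = f r False" if "r < d" for r
          using that
        proof (induction r rule: less_induct)
          case (less r)
          show ?case
          proof (cases "r < q - d")
            case True then show ?thesis by (rule A)
          next
            case False
            define r' where "r' = r - (q - d)"
            have r': "r' < r" "r' < d" "r' + q - d = r" using False less.prems dq d0 unfolding r'_def by auto
            have IH: "f r' True = f r' False" using less.IH[OF r'(1) r'(2)] .
            have "f r (Y t1) = f r' (W t1)" using E2[OF t1(1) r'(2)] r'(3) by simp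
            also have "\<dots> = f r' (W 0)" by (rule bcst[OF IH])
            also have "\<dots> = f r (Y 0)" using E2[of 0 r'] r'(2,3) by simp
            finally have "f r (Y t1) = f r (Y 0)" .
            then show ?thesis by (rule bcst2[OF t1(2)])
          qed
        qed
        then show False using B[OF r0d] r0(2) by simp
      qed
    qed
  qed
qed


lemma phi_pow_ge:
  fixes q c f :: nat
  assumes "q \<ge> 2" "f \<ge> 1"
  shows "((\<lambda>L. q*L + c)^^m) f \<ge> 2^m"
proof (induction m)
  case 0 then show ?case using assms by simp
next
  case (Suc m)
  have e: "((\<lambda>L. q*L + c)^^Suc m) f = q * ((\<lambda>L. q*L + c)^^m) f + c" by simp
  have "2 * 2^m \<le> q * ((\<lambda>L. q*L + c)^^m) f" by (rule mult_le_mono[OF assms(1) Suc.IH])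
  then show ?case unfolding e power_Suc by linarith
qed

lemma range_summable:
  fixes q c f :: nat
  assumes q: "q \<ge> 2" and f: "f \<ge> 1"
  shows "(\<lambda>l. 1 / real l) summable_on range (\<lambda>m. ((\<lambda>L. q*L + c)^^m) f)"
proof -
  let ?g = "\<lambda>m. ((\<lambda>L. q*L + c)^^m) f"
  have sm: "strict_mono ?g"
  proof (rule strict_monoI_Suc)
    fix m
    have "(1::nat) \<le> 2^m" by simp
    then have "?g m \<ge> 1" using phi_pow_ge[OF q f, where c=c and m=m] by (rule order_trans)
    moreover have "2 * ?g m \<le> q * ?g m" using q by (rule mult_right_mono) simp
    moreover have e: "?g (Suc m) = q * ?g m + c" by simp
    ultimately show "?g m < ?g (Suc m)" by linarith
  qed
  have inj: "inj ?g" using sm strict_mono_imp_inj_on by blast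
  have le: "1 / real (?g m) \<le> (1/2)^m" for m
  proof -
    have "real (2^m) \<le> real (?g m)" using phi_pow_ge[OF q f, where c=c and m=m] by (rule of_nat_mono)
    then have a: "(2::real)^m \<le> real (?g m)" by simp
    have b: "(0::real) < 2^m" by simp
    have c: "(0::real) < real (?g m)" using a b by linarith
    have "1 / real (?g m) \<le> 1 / 2^m" by (rule divide_left_mono[OF a]) (use b c in auto)
    then show ?thesis by (simp add: power_one_over)
  qed
  have "summable (\<lambda>m. 1 / real (?g m))"
    by (rule summable_comparison_test[where g="\<lambda>m. (1/2::real)^m"]) (use le in auto)
  then have "(\<lambda>m. 1 / real (?g m)) summable_on UNIV"
    by (subst summable_on_UNIV_nonneg_real_iff) auto
  then show ?thesis using summable_on_reindex[OF inj, of "\<lambda>l. 1 / real l"] by (simp add: o_def)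
qed

lemma summable_on_finite_Union:
  fixes g :: "'a \<Rightarrow> real"
  assumes "finite F" "\<And>f. f \<in> F \<Longrightarrow> g summable_on A f"
  shows "g summable_on (\<Union>f\<in>F. A f)"
  using assms
proof (induction F rule: finite_induct)
  case empty then show ?case by simp
next
  case (insert a F) then show ?case by (simp add: summable_on_union)
qed

lemma summable_recur:
  fixes S :: "nat set" and q c M :: nat
  assumes q: "q \<ge> 2" and pos: "\<And>l. l \<in> S \<Longrightarrow> l \<ge> 1"
    and rec: "\<And>l. l \<in> S \<Longrightarrow> l \<ge> M \<Longrightarrow> \<exists>L\<in>S. l = q*L + c"
  shows "(\<lambda>l. 1 / real l) summable_on S"
proof -
  let ?g = "\<lambda>f m. ((\<lambda>L. q*L + c)^^m) f"
  have sub: "l \<in> S \<Longrightarrow> l \<in> (\<Union>f\<in>{1..M}. range (?g f))" for l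
  proof (induction l rule: less_induct)
    case (less l)
    show ?case
    proof (cases "l < M")
      case True
      then have "l = ?g l 0" by simp
      then show ?thesis using True pos[OF less.prems]
        by (intro UN_I[of l]) (auto intro: range_eqI[of _ _ 0])
    next
      case False
      then obtain L where L: "L \<in> S" "l = q*L + c" using rec less.prems by force
      have "L \<ge> 1" using pos L by auto
      then have "L < l" proof -
        have "2 * L \<le> q * L" using q by (rule mult_right_mono) simp
        then show ?thesis using L \<open>L \<ge> 1\<close> by linarith
      qed
      then obtain f m where fm: "f \<in> {1..M}" "L = ?g f m" using less.IH L by blast
      have "l = ?g f (Suc m)" using fm L by simp
      then show ?thesis using fm by blast
    qed
  qed
  have "(\<lambda>l. 1 / real l) summable_on (\<Union>f\<in>{1..M}. range (?g f))"
    by (rule summable_on_finite_Union) (use range_summable[OF q] in auto)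
  then show ?thesis using sub summable_on_subset_banach by blast
qed

context sub
begin

definition XX :: "nat \<Rightarrow> bool" where "XX n = (x n = 1)"
definition ff :: "nat \<Rightarrow> bool \<Rightarrow> bool" where "ff r b = (\<zeta> (if b then 1 else 0) ! r = 1)"

lemma alph_cases: "a \<in> alph \<Longrightarrow> a = 0 \<or> a = 1" by (auto simp: alph_def)

lemma x_XX: "x n = (if XX n then 1 else 0)"
  using x_alph[of n] by (auto simp: XX_def alph_def)

lemma XX_rel: "r < q \<Longrightarrow> XX (q*n + r) = ff r (XX n)"
  using x_step[of r n] alph_cases[OF x_alph[of n]] unfolding XX_def ff_def by auto

lemma H1: "a \<in> alph \<Longrightarrow> b \<in> alph \<Longrightarrow> \<zeta> a ! r \<noteq> \<zeta> b ! r \<Longrightarrow> a \<noteq> b \<and> \<zeta> 0 ! r \<noteq> \<zeta> 1 ! r"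
  unfolding alph_def by auto
lemma H2: "a \<in> alph \<Longrightarrow> b \<in> alph \<Longrightarrow> a \<noteq> b \<Longrightarrow> \<zeta> a ! r = \<zeta> b ! r \<Longrightarrow> \<zeta> 0 ! r = \<zeta> 1 ! r"
  unfolding alph_def by auto
lemma H3: "a \<in> alph \<Longrightarrow> b \<in> alph \<Longrightarrow> \<zeta> 0 ! r \<noteq> \<zeta> 1 ! r \<Longrightarrow> \<zeta> a ! r = \<zeta> b ! r \<Longrightarrow> a = b"
  unfolding alph_def by auto

lemma uv_diff: "\<exists>r0<q. \<zeta> 0 ! r0 \<noteq> \<zeta> 1 ! r0"
proof (rule ccontr)
  assume "\<not> ?thesis"
  then have e: "\<zeta> 0 ! r = \<zeta> 1 ! r" if "r < q" for r using that by auto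
  have "x (n + q) = x n" for n
  proof -
    have q0: "q > 0" using q2 by simp
    have r: "n mod q < q" using q0 by simp
    have n: "n = q*(n div q) + n mod q" by simp
    have n': "n + q = q*(n div q + 1) + n mod q" by simp
    have "x (n+q) = \<zeta> (x (n div q + 1)) ! (n mod q)" by (subst n') (rule x_step[OF r])
    also have "\<dots> = \<zeta> (x (n div q)) ! (n mod q)"
      using alph_cases[OF x_alph[of "n div q + 1"]] alph_cases[OF x_alph[of "n div q"]] e[OF r] by auto
    also have "\<dots> = x n" by (subst (2) n) (rule x_step[OF r, symmetric])
    finally show ?thesis .
  qed
  then show False using periodic_false[of q] q2 by simp
qed

lemma ff_inj: "\<exists>r0<q. ff r0 True \<noteq> ff r0 False"
proof -
  obtain r0 where r0: "r0 < q" "\<zeta> 0 ! r0 \<noteq> \<zeta> 1 ! r0" using uv_diff by blast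
  have "\<zeta> 0 ! r0 \<in> alph" "\<zeta> 1 ! r0 \<in> alph"
    using zset[OF alph0] zset[OF alph1] zlen[OF alph0] zlen[OF alph1] r0(1) by (auto intro: nth_mem)
  then have "ff r0 True \<noteq> ff r0 False" using r0(2) unfolding ff_def by (auto simp: alph_def)
  then show ?thesis using r0 by blast
qed

lemma v_has0: "\<exists>r1<q. \<zeta> 1 ! r1 = 0"
proof (rule ccontr)
  assume nt: "\<not> ?thesis"
  have "set (\<zeta> 1) \<subseteq> {1}"
  proof
    fix a assume a: "a \<in> set (\<zeta> 1)"
    then obtain r where r: "r < length (\<zeta> 1)" "\<zeta> 1 ! r = a" by (metis in_set_conv_nth)
    have "a \<in> alph" using a zset[OF alph1] by blast
    moreover have "a \<noteq> 0" using r nt zlen[OF alph1] by auto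
    ultimately show "a \<in> {1}" by (auto simp: alph_def)
  qed
  then have "set (subst_word_pow \<zeta> K [1]) \<subseteq> {1}" for K
  proof (induction K)
    case 0 then show ?case by simp
  next
    case (Suc K)
    then show ?case by auto
  qed
  moreover obtain k where "\<forall>a\<in>alph. \<forall>b\<in>alph. b \<in> set (subst_pow \<zeta> k a)" using prim by (auto simp: primitive_subst_def)
  then have "0 \<in> set (subst_pow \<zeta> k 1)" using alph0 alph1 by blast
  ultimately show False by (auto simp: subst_pow_def)
qed

lemma XX0: "\<not> XX 0" using x0 by (simp add: XX_def)

lemma gap: "\<exists>m. q*c \<le> m \<and> m < q*c + q \<and> \<not> XX m"
proof (cases "XX c")
  case False
  have "x (q*c + 0) = \<zeta> (x c) ! 0" using q2 by (intro x_step) simp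
  also have "\<dots> = 0"
  proof -
    have ne: "\<zeta> 0 \<noteq> []" using zlen[OF alph0] q2 by auto
    have "x c = 0" using False x_XX[of c] by simp
    then show ?thesis using hd0 ne by (simp add: hd_conv_nth)
  qed
  finally have "\<not> XX (q*c)" by (simp add: XX_def)
  then show ?thesis using q2 by (intro exI[of _ "q*c"]) auto
next
  case True
  obtain r1 where r1: "r1 < q" "\<zeta> 1 ! r1 = 0" using v_has0 by blast
  have "x (q*c + r1) = 0" using x_step[OF r1(1), of c] True x_XX[of c] r1(2) by simp
  then show ?thesis using r1 by (intro exI[of _ "q*c + r1"]) (simp add: XX_def)
qed

lemma XX_block: "\<not> XX m \<Longrightarrow> r < q^K \<Longrightarrow> XX (q^K*m + r) = XX r"
proof -
  assume m: "\<not> XX m" and r: "r < q^K"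
  have "x m = x 0" using m x_XX[of m] x0 by simp
  then have "x (q^K*m + r) = x (q^K*0 + r)" using x_block[OF r, of m] x_block[OF r, of 0] by simp
  then show ?thesis by (simp add: XX_def)
qed

lemma nop: "\<exists>P. \<forall>n. \<not> (\<forall>k<P. XX (n+k+2) = XX (n+k))"
proof (rule ccontr)
  assume "\<not> ?thesis"
  then have H: "\<exists>n. \<forall>k<P. XX (n+k+2) = XX (n+k)" for P by blast
  have per: "XX (r+2) = XX r" for r
  proof -
    define N where "N = q^(r+2)"
    have rN: "r + 2 < N" unfolding N_def by (rule n_lt_pow)
    have N0: "N > 0" using rN by simp
    obtain n where n: "\<forall>k<N*(2*q+2). XX (n+k+2) = XX (n+k)" using H by blast
    define m0 where "m0 = n div N + 1"
    have m0: "n < N*m0" "N*m0 \<le> n + N"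
    proof -
      have "N * (n div N) \<le> n" by simp
      moreover have "n < N * (n div N) + N" using N0 by (metis mod_less_divisor div_mult_mod_eq add_less_cancel_left mult.commute)
      ultimately show "n < N*m0" "N*m0 \<le> n + N" unfolding m0_def by auto
    qed
    define c where "c = m0 div q + 1"
    obtain m where m: "q*c \<le> m" "m < q*c + q" "\<not> XX m" using gap by blast
    have cm: "m0 \<le> q*c" "q*c \<le> m0 + q"
    proof -
      have q0: "q > 0" using q2 by simp
      have "q * (m0 div q) \<le> m0" by simp
      moreover have "m0 < q * (m0 div q) + q" using q0 by (metis mod_less_divisor div_mult_mod_eq add_less_cancel_left mult.commute)
      ultimately show "m0 \<le> q*c" "q*c \<le> m0 + q" unfolding c_def by auto
    qed
    have mm: "m0 \<le> m" "m + 1 \<le> m0 + 2*q" using m cm by auto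
    have a1: "N*m0 \<le> N*m" using mm by simp
    have a2: "N*(m+1) \<le> N*(m0 + 2*q)" using mm by (intro mult_le_mono2)
    have a3: "N*(m0 + 2*q) = N*m0 + N*(2*q)" by (simp add: distrib_left)
    have a4: "N*(m+1) = N*m + N" by simp
    have a5: "N*(2*q+2) = N*(2*q) + 2*N" by (simp add: distrib_left)
    define k where "k = N*m + r - n"
    have b2: "N*m + N \<le> N*m0 + N*(2*q)" using a2 by (simp add: distrib_left)
    have b5: "N*(2*q) + 2*N \<le> N*(2*q+2)" by (simp add: distrib_left)
    have k1: "k < N*(2*q+2)" unfolding k_def using a1 b2 b5 m0 rN by linarith
    have k2: "n + k = N*m + r" unfolding k_def using a1 m0 by linarith
    note k = k1 k2
    have "XX (n+k+2) = XX (n+k)" using n k(1) by blast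
    then have "XX (N*m + (r+2)) = XX (N*m + r)" using k(2) by (simp add: add.assoc)
    moreover have "XX (N*m + (r+2)) = XX (r+2)" using XX_block[OF m(3), of "r+2" "r+2"] rN unfolding N_def by simp
    moreover have "XX (N*m + r) = XX r" using XX_block[OF m(3), of r "r+2"] rN unfolding N_def by simp
    ultimately show ?thesis by simp
  qed
  have "x (n + 2) = x n" for n using per[of n] x_XX[of n] x_XX[of "n+2"] by simp
  then show False using periodic_false[of 2] by simp
qed

lemma recog: "\<exists>Mr. \<forall>i j. (\<forall>k<Mr. x (i+k) = x (j+k)) \<longrightarrow> i mod q = j mod q"
proof -
  obtain P where P: "\<And>n. \<not> (\<forall>k<P. XX (n+k+2) = XX (n+k))" using nop by blast
  obtain r0 where r0: "r0 < q" "ff r0 True \<noteq> ff r0 False" using ff_inj by blast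
  have q0: "q > 0" using q2 by simp
  have "\<forall>i j. (\<forall>k<q*(P+4). x (i+k) = x (j+k)) \<longrightarrow> i mod q = j mod q"
  proof (intro allI impI)
    fix i j assume e: "\<forall>k<q*(P+4). x (i+k) = x (j+k)"
    then have e1: "\<And>k. k < q*(P+4) \<Longrightarrow> XX (i+k) = XX (j+k)" by (simp add: XX_def)
    have e2: "\<And>k. k < q*(P+4) \<Longrightarrow> XX (j+k) = XX (i+k)" using e1 by simp
    consider "j < i" | "i < j" | "i = j" by linarith
    then show "i mod q = j mod q"
    proof cases
      case 1 show ?thesis by (rule recog_core[OF q0 XX_rel r0 P e1 1])
    next
      case 2 show ?thesis using recog_core[OF q0 XX_rel r0 P e2 2] by simp
    next
      case 3 then show ?thesis by simp
    qed
  qed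
  then show ?thesis by blast
qed

definition fst_d where "fst_d = (LEAST r. r < q \<and> \<zeta> 0 ! r \<noteq> \<zeta> 1 ! r)"
definition lst_d where "lst_d = (GREATEST r. r < q \<and> \<zeta> 0 ! r \<noteq> \<zeta> 1 ! r)"

lemma desub:
  assumes line: "(i, j) \<in> inner_lines x l" and lM: "l \<ge> 2*q + 1" and modeq: "i mod q = j mod q"
  shows "\<exists>L. L \<ge> 1 \<and> inner_lines x L \<noteq> {} \<and> l = q*L + ((q - 1 - lst_d) + fst_d)"
proof -
  have q0: "q > 0" using q2 by simp
  from line have i0: "i > 0" and j0: "j > 0" and ij: "i \<noteq> j"
    and eqk: "\<And>k. k < l \<Longrightarrow> x (i+k) = x (j+k)"
    and xl: "x (i-1) \<noteq> x (j-1)" and xr: "x (i+l) \<noteq> x (j+l)"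
    by (auto simp: inner_lines_def rp_line_def rp_entry_def)
  define \<rho> where "\<rho> = (i-1) mod q"
  define n0 where "n0 = (i-1) div q"
  define n0' where "n0' = (j-1) div q"
  have \<rho>q: "\<rho> < q" using q0 unfolding \<rho>_def by simp
  have \<rho>j: "(j-1) mod q = \<rho>"
  proof -
    have "(i + (q-1)) mod q = (j + (q-1)) mod q" using modeq by (metis mod_add_left_eq)
    moreover have "i + (q-1) = (i-1) + q" "j + (q-1) = (j-1) + q" using i0 j0 q0 by auto
    ultimately show ?thesis unfolding \<rho>_def by simp
  qed
  have iI: "i = q*n0 + \<rho> + 1" using i0 unfolding n0_def \<rho>_def by simp
  have jI: "j = q*n0' + \<rho> + 1" using j0 \<rho>j unfolding n0'_def by (metis Suc_diff_1 Suc_eq_plus1 div_mult_mod_eq mult.commute)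
  have "x (i-1) = \<zeta> (x n0) ! \<rho>" using x_step[OF \<rho>q, of n0] iI by simp
  moreover have "x (j-1) = \<zeta> (x n0') ! \<rho>" using x_step[OF \<rho>q, of n0'] jI by simp
  ultimately have L1: "x n0 \<noteq> x n0'" "\<zeta> 0 ! \<rho> \<noteq> \<zeta> 1 ! \<rho>" using H1[OF x_alph x_alph] xl by metis+
  have after: "\<zeta> 0 ! r = \<zeta> 1 ! r" if "\<rho> < r" "r < q" for r
  proof -
    define k where "k = r - \<rho> - 1"
    have "k < l" using that lM unfolding k_def by linarith
    then have "x (i+k) = x (j+k)" by (rule eqk)
    moreover have "i + k = q*n0 + r" "j + k = q*n0' + r" using iI jI that unfolding k_def by auto
    ultimately have "\<zeta> (x n0) ! r = \<zeta> (x n0') ! r" using x_step[OF that(2)] by metis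
    then show ?thesis using H2[OF x_alph x_alph L1(1)] by blast
  qed
  have lst: "lst_d = \<rho>"
    unfolding lst_d_def
  proof (rule Greatest_equality)
    show "\<rho> < q \<and> \<zeta> 0 ! \<rho> \<noteq> \<zeta> 1 ! \<rho>" using \<rho>q L1 by simp
    show "\<And>y. y < q \<and> \<zeta> 0 ! y \<noteq> \<zeta> 1 ! y \<Longrightarrow> y \<le> \<rho>" using after not_le by metis
  qed
  define \<rho>1 where "\<rho>1 = (i+l) mod q"
  define n1 where "n1 = (i+l) div q"
  define n1' where "n1' = (j+l) div q"
  have \<rho>1q: "\<rho>1 < q" using q0 unfolding \<rho>1_def by simp
  have \<rho>1j: "(j+l) mod q = \<rho>1" unfolding \<rho>1_def using modeq by (metis mod_add_left_eq)
  have iE: "i + l = q*n1 + \<rho>1" unfolding n1_def \<rho>1_def by simp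
  have jE: "j + l = q*n1' + \<rho>1" unfolding n1'_def using \<rho>1j by (metis div_mult_mod_eq mult.commute)
  have "x (i+l) = \<zeta> (x n1) ! \<rho>1" using x_step[OF \<rho>1q, of n1] iE by simp
  moreover have "x (j+l) = \<zeta> (x n1') ! \<rho>1" using x_step[OF \<rho>1q, of n1'] jE by simp
  ultimately have R1: "x n1 \<noteq> x n1'" "\<zeta> 0 ! \<rho>1 \<noteq> \<zeta> 1 ! \<rho>1" using H1[OF x_alph x_alph] xr by metis+
  have before: "\<zeta> 0 ! r = \<zeta> 1 ! r" if "r < \<rho>1" for r
  proof -
    define k where "k = l - (\<rho>1 - r)"
    have rq: "r < q" using that \<rho>1q by simp
    have "k < l" using that lM \<rho>1q unfolding k_def by linarith
    then have "x (i+k) = x (j+k)" by (rule eqk)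
    moreover have "i + k = q*n1 + r" "j + k = q*n1' + r" using iE jE that lM \<rho>1q unfolding k_def by auto
    ultimately have "\<zeta> (x n1) ! r = \<zeta> (x n1') ! r" using x_step[OF rq] by metis
    then show ?thesis using H2[OF x_alph x_alph R1(1)] by blast
  qed
  have fst: "fst_d = \<rho>1"
    unfolding fst_d_def
  proof (rule Least_equality)
    show "\<rho>1 < q \<and> \<zeta> 0 ! \<rho>1 \<noteq> \<zeta> 1 ! \<rho>1" using \<rho>1q R1 by simp
    show "\<And>y. y < q \<and> \<zeta> 0 ! y \<noteq> \<zeta> 1 ! y \<Longrightarrow> \<rho>1 \<le> y" using before not_le by metis
  qed
  have dn: "q*(n0+1) < q*n1"
  proof -
    have "q*(n0+1) = q*n0 + q" by simp
    then show ?thesis using iI iE lM \<rho>1q by linarith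
  qed
  then have n01: "n0 + 1 < n1" by (rule mult_left_less_imp_less) simp
  have "q*(n1 + n0') = q*(n1' + n0)"
  proof -
    have "q*(n1 + n0') = q*n1 + q*n0'" "q*(n1' + n0) = q*n1' + q*n0" by (simp_all add: distrib_left)
    then show ?thesis using iI jI iE jE by linarith
  qed
  then have n1': "n1 + n0' = n1' + n0" using q0 by (metis mult_cancel1 not_gr0)
  define L where "L = n1 - (n0 + 1)"
  have L1': "L \<ge> 1" using n01 unfolding L_def by simp
  have n0ne: "n0 \<noteq> n0'" using iI jI ij by auto
  have eqt: "x (n0 + 1 + t) = x (n0' + 1 + t)" if "t < L" for t
  proof -
    define k where "k = q*(n0+1+t) + \<rho>1 - i"
    have h1: "q*(n0+1+t) = q*n0 + q + q*t" by (simp add: distrib_left)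
    have h2: "q*(n0'+1+t) = q*n0' + q + q*t" by (simp add: distrib_left)
    have h3: "q*(n0+1+t) + q \<le> q*n1"
    proof -
      have "n0 + 1 + t + 1 \<le> n1" using that unfolding L_def by simp
      then have "q*(n0 + 1 + t + 1) \<le> q*n1" by (rule mult_le_mono2)
      then show ?thesis by (simp add: distrib_left)
    qed
    have "k < l" unfolding k_def using h1 h3 iI iE \<rho>1q \<rho>q by linarith
    then have "x (i+k) = x (j+k)" by (rule eqk)
    moreover have "i + k = q*(n0+1+t) + \<rho>1" unfolding k_def using h1 iI \<rho>q by linarith
    moreover have "j + k = q*(n0'+1+t) + \<rho>1" unfolding k_def using h1 h2 iI jI \<rho>q by linarith
    ultimately have "\<zeta> (x (n0+1+t)) ! \<rho>1 = \<zeta> (x (n0'+1+t)) ! \<rho>1" using x_step[OF \<rho>1q] by metis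
    then show ?thesis using H3[OF x_alph x_alph R1(2)] by blast
  qed
  have AL: "n0 + 1 + L = n1" "n0' + 1 + L = n1'" using n01 n1' unfolding L_def by auto
  have "(n0+1, n0'+1) \<in> inner_lines x L"
    unfolding inner_lines_def rp_line_def rp_entry_def
    using n0ne eqt L1(1) R1(1) AL by auto
  then have ne: "inner_lines x L \<noteq> {}" by blast
  have "l = q*L + ((q - 1 - lst_d) + fst_d)"
  proof -
    have "q*(n0 + 1 + L) = q*n1" using AL by simp
    then have "q*n0 + q + q*L = q*n1" by (simp add: distrib_left)
    then show ?thesis unfolding lst fst using iI iE \<rho>q by linarith
  qed
  then show ?thesis using L1' ne by blast
qed

lemma main: "(\<lambda>l. 1 / real l) summable_on {l::nat. l \<ge> 1 \<and> inner_lines x l \<noteq> {}}"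
proof -
  obtain Mr where Mr: "\<And>i j. (\<forall>k<Mr. x (i+k) = x (j+k)) \<Longrightarrow> i mod q = j mod q" using recog by blast
  show ?thesis
  proof (rule summable_recur[OF q2, of _ "Mr + 2*q + 1" "(q - 1 - lst_d) + fst_d"])
    fix l assume "l \<in> {l. 1 \<le> l \<and> inner_lines x l \<noteq> {}}"
    then show "l \<ge> 1" by simp
  next
    fix l assume l: "l \<in> {l. 1 \<le> l \<and> inner_lines x l \<noteq> {}}" and lM: "l \<ge> Mr + 2*q + 1"
    then obtain i j where ij: "(i, j) \<in> inner_lines x l" by auto
    then have "\<forall>k<l. x (i+k) = x (j+k)" by (auto simp: inner_lines_def rp_line_def rp_entry_def)
    then have "\<forall>k<Mr. x (i+k) = x (j+k)" using lM by auto
    then have "i mod q = j mod q" by (rule Mr)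
    then obtain L where "L \<ge> 1" "inner_lines x L \<noteq> {}" "l = q*L + ((q - 1 - lst_d) + fst_d)"
      using desub[OF ij _] lM by fastforce
    then show "\<exists>L\<in>{l. 1 \<le> l \<and> inner_lines x l \<noteq> {}}. l = q*L + ((q - 1 - lst_d) + fst_d)" by auto
  qed
qed

end


theorem lemma3p2:
  fixes \<zeta> :: "nat \<Rightarrow> nat list" and q :: nat and x :: "nat \<Rightarrow> nat"
  assumes "binary_subst \<zeta>"
    and "q \<ge> 2" and "constant_length \<zeta> q"
    and "primitive_subst \<zeta>"
    and "aperiodic_subst \<zeta>"
    and "hd (\<zeta> 0) = 0"
    and "is_fixed_point_limit \<zeta> x"
  shows "(\<lambda>l. 1 / real l) summable_on {l::nat. l \<ge> 1 \<and> inner_lines x l \<noteq> {}}"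
proof -
  interpret sub \<zeta> q x using assms by unfold_locales
  show ?thesis by (rule main)
qed

end
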